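(* Every neighborhood of $(\pi/4,0)$ in $\{(r,\epsilon):r>0,\ \epsilon\ge0,\ r+\epsilon<\pi/2\}$ contains a point $(r,\epsilon)$ with $\epsilon>0$ such that $(\mathcal{Y}^\parallel_{0,r,\epsilon})'(0)=0$.
   Context: Fix $\varphi\in C^\infty(\mathbb{R})$ with $0\le\varphi\le1$, $\varphi(x)=0$ for $x\le0$, $\varphi(x)=1$ for $x\ge1$, and let $H$ be the Heaviside function ($H(x)=1$ for $x>0$, $H(x)=0$ for $x\le0$). For $r>0$, $\epsilon\ge0$ with $r+\epsilon<\pi/2$ and $\rho\ge0$ set $K^\parallel_{r,\epsilon}(\rho)=1-2\varphi((\rho-r)/\epsilon)$ if $\epsilon>0$ and $K^\parallel_{r,0}(\rho)=1-2H(\rho-r)$. $\mathcal{Y}^\parallel_{0,r,\epsilon}$ denotes the unique solution on $[0,\infty)$ of $\mathcal{Y}''(t)+K^\parallel_{r,\epsilon}(t)\mathcal{Y}(t)=0$ (for $\epsilon=0$ a $C^1$ weak solution, i.e. solving the equation for $t\ne r$) with $\mathcal{Y}(t)=e^{-t}$ for all $t\ge r+\epsilon$. (This is the stable Jacobi solution along radial geodesics of $g_{r,\epsilon}$; if its derivative vanishes at $0$, $\mathcal{Y}^\parallel_{0,r,\epsilon}(|t|)E(t)$, $E$ parallel and normal, is a Jacobi field decaying as $t\to\pm\infty$.) *)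

theory Defs
  imports "HOL-Analysis.Analysis"
begin

definition smooth_real :: "(real \<Rightarrow> real) \<Rightarrow> bool" where
  "smooth_real f \<longleftrightarrow> (\<forall>n x. ((deriv ^^ n) f) differentiable (at x))"

definition cutoff :: "(real \<Rightarrow> real) \<Rightarrow> bool" where
  "cutoff \<phi> \<longleftrightarrow> smooth_real \<phi> \<and> (\<forall>x. 0 \<le> \<phi> x \<and> \<phi> x \<le> 1)
     \<and> (\<forall>x. x \<le> 0 \<longrightarrow> \<phi> x = 0) \<and> (\<forall>x. x \<ge> 1 \<longrightarrow> \<phi> x = 1)"

definition heaviside :: "real \<Rightarrow> real" where
  "heaviside x = (if x > 0 then 1 else 0)"

definition Kpar :: "(real \<Rightarrow> real) \<Rightarrow> real \<Rightarrow> real \<Rightarrow> real \<Rightarrow> real" where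
  "Kpar \<phi> r \<epsilon> \<rho> = (if \<epsilon> > 0 then 1 - 2 * \<phi> ((\<rho> - r) / \<epsilon>) else 1 - 2 * heaviside (\<rho> - r))"

definition stable_sol :: "(real \<Rightarrow> real) \<Rightarrow> real \<Rightarrow> real \<Rightarrow> (real \<Rightarrow> real) \<Rightarrow> (real \<Rightarrow> real) \<Rightarrow> bool" where
  "stable_sol \<phi> r \<epsilon> Y D \<longleftrightarrow>
     (\<forall>t\<ge>0. (Y has_real_derivative D t) (at t within {0..}))
   \<and> continuous_on {0..} D
   \<and> (\<forall>t\<ge>0. (\<epsilon> = 0 \<longrightarrow> t \<noteq> r) \<longrightarrow>
         (D has_real_derivative (- Kpar \<phi> r \<epsilon> t * Y t)) (at t within {0..}))
   \<and> (\<forall>t\<ge>r + \<epsilon>. Y t = exp (- t))"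

end

theory Submission imports Defs begin

lemma norm_F_le:
  fixes k p q :: real assumes "\<bar>k\<bar> \<le> 1"
  shows "norm (q, - k * p) \<le> norm (p, q)"
proof -
  have "k^2 \<le> 1" using assms by (simp add: abs_square_le_1)
  hence "(k*p)^2 \<le> p^2" using mult_right_mono[of "k^2" 1 "p^2"] by (simp add: power_mult_distrib)
  thus ?thesis unfolding norm_Pair by (simp add: real_sqrt_le_mono add.commute)
qed

lemma ode_exists:
  fixes k :: "real \<Rightarrow> real" and \<epsilon> :: real and c :: "real \<times> real"
  assumes eps: "0 < \<epsilon>" "\<epsilon> \<le> 1/4" and kc: "continuous_on UNIV k" and kb: "\<And>u. \<bar>k u\<bar> \<le> 1"
  shows "\<exists>V. continuous_on {0..\<epsilon>} V \<and>
     (\<forall>u\<in>{0..\<epsilon>}. V u = c - integral {u..\<epsilon>} (\<lambda>s. (snd (V s), - k s * fst (V s))))"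
proof -
  define F where "F = (\<lambda>s (p::real\<times>real). (snd p, - k s * fst p))"
  have Fc: "continuous_on S (\<lambda>s. F s (f s))" if "continuous_on S f" for S f
  proof -
    have "continuous_on S k" using kc continuous_on_subset by blast
    thus ?thesis using that unfolding F_def by (auto intro!: continuous_intros)
  qed
  have Flip: "norm (F s p - F s q) \<le> norm (p - q)" for s p q
  proof -
    have "F s p - F s q = (snd (p - q), - k s * fst (p - q))"
      unfolding F_def by (simp add: algebra_simps)
    also have "norm \<dots> \<le> norm (fst (p - q), snd (p - q))" by (rule norm_F_le[OF kb])
    finally show ?thesis by (metis prod.collapse)
  qed
  have Fb: "norm (F s p) \<le> norm p" for s p using Flip[of s p 0] unfolding F_def by simp
  define cl where "cl u = max 0 (min \<epsilon> u)" for u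
  have cl_in: "cl u \<in> {0..\<epsilon>}" for u using eps unfolding cl_def by auto
  have cl_id: "u \<in> {0..\<epsilon>} \<Longrightarrow> cl u = u" for u unfolding cl_def by auto
  have cl_cont: "continuous_on UNIV cl" unfolding cl_def by (intro continuous_intros)
  have cont_int: "continuous_on {0..\<epsilon>} (\<lambda>u. integral {u..\<epsilon>} h)"
    if "continuous_on {0..\<epsilon>} h" for h :: "real \<Rightarrow> real \<times> real"
    unfolding continuous_on_eq_continuous_within
    using has_vector_derivative_continuous[OF integral_has_vector_derivative'[OF that]] by blast
  define G where "G = (\<lambda>(x::real \<Rightarrow>\<^sub>C (real \<times> real)) u. c - integral {cl u..\<epsilon>} (\<lambda>s. F s (apply_bcontfun x s)))"
  have Gb: "G x \<in> bcontfun" for x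
  proof (rule bcontfun_normI)
    have "continuous_on {0..\<epsilon>} (\<lambda>u. integral {u..\<epsilon>} (\<lambda>s. F s (apply_bcontfun x s)))"
      by (intro cont_int Fc) simp
    then have "continuous_on UNIV (\<lambda>u. integral {cl u..\<epsilon>} (\<lambda>s. F s (apply_bcontfun x s)))"
      by (rule continuous_on_compose2[OF _ cl_cont]) (use cl_in in auto)
    then show "continuous_on UNIV (G x)" unfolding G_def by (intro continuous_intros)
  next
    fix u
    have "norm (integral {cl u..\<epsilon>} (\<lambda>s. F s (apply_bcontfun x s))) \<le> norm x * (\<epsilon> - cl u)"
      using cl_in[of u]
      by (intro integral_bound Fc) (auto intro: order_trans[OF Fb norm_bounded])
    also have "\<dots> \<le> norm x * \<epsilon>" using cl_in[of u] by (intro mult_left_mono) auto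
    finally show "norm (G x u) \<le> norm c + norm x * \<epsilon>" unfolding G_def
      by (smt (verit) norm_triangle_ineq4)
  qed
  define T where "T x = Bcontfun (G x)" for x
  have TG: "apply_bcontfun (T x) = G x" for x unfolding T_def using Gb by (simp add: Bcontfun_inverse)
  have contr: "\<forall>x y. dist (T x) (T y) \<le> \<epsilon> * dist x y"
  proof (intro allI dist_bound)
    fix x y u
    have "dist (T x u) (T y u) = norm (integral {cl u..\<epsilon>} (\<lambda>s. F s (apply_bcontfun x s))
        - integral {cl u..\<epsilon>} (\<lambda>s. F s (apply_bcontfun y s)))"
      unfolding TG G_def dist_norm by (simp add: norm_minus_commute)
    also have "\<dots> = norm (integral {cl u..\<epsilon>} (\<lambda>s. F s (apply_bcontfun x s) - F s (apply_bcontfun y s)))"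
      by (subst integral_diff) (auto intro!: integrable_continuous_real Fc)
    also have "\<dots> \<le> dist x y * (\<epsilon> - cl u)"
      using cl_in[of u] order_trans[OF Flip dist_bounded[of x _ y, unfolded dist_norm]]
      by (intro integral_bound continuous_intros Fc) (auto simp: dist_norm)
    also have "\<dots> \<le> \<epsilon> * dist x y" using cl_in[of u] zero_le_dist[of x y] mult_left_mono[of "\<epsilon> - cl u" \<epsilon> "dist x y"]
      by (simp add: mult.commute)
    finally show "dist (T x u) (T y u) \<le> \<epsilon> * dist x y" .
  qed
  obtain x where fx: "T x = x" using banach_fix_type[OF _ _ contr] eps by auto
  show ?thesis
  proof (intro exI[of _ "apply_bcontfun x"] conjI ballI)
    show "continuous_on {0..\<epsilon>} (apply_bcontfun x)" by simp
  next
    fix u assume u: "u \<in> {0..\<epsilon>}"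
    have "x u = G x u" using fx TG by metis
    thus "x u = c - integral {u..\<epsilon>} (\<lambda>s. (snd (x s), - k s * fst (x s)))"
      unfolding G_def cl_id[OF u] F_def by simp
  qed
qed

lemma ode_sol:
  fixes k :: "real \<Rightarrow> real" and \<epsilon> :: real and c :: "real \<times> real"
  assumes eps: "0 < \<epsilon>" "\<epsilon> \<le> 1/4" and kc: "continuous_on UNIV k" and kb: "\<And>u. \<bar>k u\<bar> \<le> 1"
  obtains V where
    "\<And>u. u \<in> {0..\<epsilon>} \<Longrightarrow> (V has_vector_derivative (snd (V u), - k u * fst (V u))) (at u within {0..\<epsilon>})"
    "V \<epsilon> = c" "norm (V 0 - c) \<le> 2 * \<epsilon> * norm c"
proof -
  obtain V where Vc: "continuous_on {0..\<epsilon>} V" and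
    Vi: "\<And>u. u\<in>{0..\<epsilon>} \<Longrightarrow> V u = c - integral {u..\<epsilon>} (\<lambda>s. (snd (V s), - k s * fst (V s)))"
    using ode_exists[OF eps kc kb, of c] by blast
  define h where "h = (\<lambda>s. (snd (V s), - k s * fst (V s)))"
  have hc: "continuous_on {0..\<epsilon>} h"
  proof -
    have "continuous_on {0..\<epsilon>} k" using kc continuous_on_subset by blast
    thus ?thesis using Vc unfolding h_def by (auto intro!: continuous_intros)
  qed
  have hb: "norm (h s) \<le> norm (V s)" for s
    using norm_F_le[OF kb[of s], of "snd (V s)" "fst (V s)"] unfolding h_def by simp
  have Vi': "V u = c - integral {u..\<epsilon>} h" if "u \<in> {0..\<epsilon>}" for u
    using Vi[OF that] unfolding h_def .
  have der: "(V has_vector_derivative h u) (at u within {0..\<epsilon>})" if u: "u \<in> {0..\<epsilon>}" for u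
  proof -
    have "((\<lambda>u. c - integral {u..\<epsilon>} h) has_vector_derivative (0 - - h u)) (at u within {0..\<epsilon>})"
      by (intro has_vector_derivative_diff has_vector_derivative_const
          integral_has_vector_derivative'[OF hc u])
    hence "((\<lambda>u. c - integral {u..\<epsilon>} h) has_vector_derivative h u) (at u within {0..\<epsilon>})" by simp
    thus ?thesis by (rule has_vector_derivative_transform[OF u, rotated]) (use Vi' in auto)
  qed
  have Ve: "V \<epsilon> = c" using Vi'[of \<epsilon>] eps by simp
  obtain u0 where u0: "u0 \<in> {0..\<epsilon>}" and M: "\<And>u. u \<in> {0..\<epsilon>} \<Longrightarrow> norm (V u) \<le> norm (V u0)"
  proof -
    have "continuous_on {0..\<epsilon>} (\<lambda>u. norm (V u))" using Vc by (intro continuous_intros)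
    from continuous_attains_sup[OF compact_Icc _ this] eps that show ?thesis by auto
  qed
  have ib: "norm (integral {u..\<epsilon>} h) \<le> norm (V u0) * \<epsilon>" if u: "u \<in> {0..\<epsilon>}" for u
  proof -
    have "norm (integral {u..\<epsilon>} h) \<le> norm (V u0) * (\<epsilon> - u)"
      using u by (intro integral_bound continuous_on_subset[OF hc] order_trans[OF hb M]) auto
    also have "\<dots> \<le> norm (V u0) * \<epsilon>" using u by (intro mult_left_mono) auto
    finally show ?thesis .
  qed
  have "norm (V u0) \<le> norm c + norm (V u0) * \<epsilon>"
    using Vi'[OF u0] ib[OF u0] by (smt (verit) norm_triangle_ineq4)
  moreover have "norm (V u0) * \<epsilon> \<le> norm (V u0) * (1/4)" using eps by (intro mult_left_mono) auto
  ultimately have "norm (V u0) * (3/4) \<le> norm c" by linarith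
  hence M2: "norm (V u0) \<le> 2 * norm c" using norm_ge_zero[of c] by linarith
  have "norm (V 0 - c) = norm (integral {0..\<epsilon>} h)" using Vi'[of 0] eps by simp
  also have "\<dots> \<le> norm (V u0) * \<epsilon>" using ib[of 0] eps by simp
  also have "\<dots> \<le> 2 * \<epsilon> * norm c" using mult_right_mono[OF M2, of \<epsilon>] eps by (simp add: algebra_simps)
  finally show ?thesis using that der Ve unfolding h_def by blast
qed

lemma vd_fst: "(Z has_vector_derivative v) F \<Longrightarrow> ((\<lambda>t. fst (Z t)) has_real_derivative fst v) F"
  unfolding has_real_derivative_iff_has_vector_derivative has_vector_derivative_def
  by (drule has_derivative_fst) simp

lemma vd_snd: "(Z has_vector_derivative v) F \<Longrightarrow> ((\<lambda>t. snd (Z t)) has_real_derivative snd v) F"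
  unfolding has_real_derivative_iff_has_vector_derivative has_vector_derivative_def
  by (drule has_derivative_snd) simp

lemma build_Y:
  fixes \<phi> :: "real \<Rightarrow> real" and r \<epsilon> a b :: real and V :: "real \<Rightarrow> real \<times> real"
  assumes phi0: "\<And>x. x \<le> 0 \<Longrightarrow> \<phi> x = 0" and phi1: "\<And>x. x \<ge> 1 \<Longrightarrow> \<phi> x = 1"
   and eps: "0 < \<epsilon>" and r: "0 < r"
   and Vd: "\<And>u. u \<in> {0..\<epsilon>} \<Longrightarrow> (V has_vector_derivative
          (snd (V u), - (1 - 2 * \<phi> (u / \<epsilon>)) * fst (V u))) (at u within {0..\<epsilon>})"
   and Ve: "V \<epsilon> = (exp (- \<epsilon>), - exp (- \<epsilon>))"
   and ab: "V 0 = (a, b)" and z: "a * sin r + b * cos r = 0"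
  shows "\<exists>Y D. stable_sol \<phi> r \<epsilon> Y D \<and> D 0 = 0"
proof -
  define E where "E = exp (- r)"
  define Z1 where "Z1 = (\<lambda>t. (E * (a * cos (t - r) + b * sin (t - r)), E * (- a * sin (t - r) + b * cos (t - r))))"
  define Z2 where "Z2 = (\<lambda>t. E *\<^sub>R V (t - r))"
  define Z3 where "Z3 = (\<lambda>t::real. (exp (- t), - exp (- t)))"
  define W where "W = (\<lambda>t. if t \<in> {r..r+\<epsilon>} then Z2 t else Z3 t)"
  define Z where "Z = (\<lambda>t. if t \<in> {0..r} then Z1 t else W t)"
  define K where "K = Kpar \<phi> r \<epsilon>"
  have K_eq: "K t = 1 - 2 * \<phi> ((t - r) / \<epsilon>)" for t unfolding K_def Kpar_def using eps by simp
  have K1: "K t = 1" if "t \<le> r" for t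
  proof -
    have "(t - r) / \<epsilon> \<le> 0" using that eps by (simp add: divide_nonpos_pos)
    thus ?thesis using K_eq phi0 by simp
  qed
  have K3: "K t = -1" if "t \<ge> r + \<epsilon>" for t
  proof -
    have "(t - r) / \<epsilon> \<ge> 1" using that eps by (simp add: pos_le_divide_eq)
    thus ?thesis using K_eq phi1 by simp
  qed
  have Z12: "Z1 r = Z2 r" unfolding Z1_def Z2_def using ab by simp
  have Z23: "Z2 (r + \<epsilon>) = Z3 (r + \<epsilon>)" unfolding Z2_def Z3_def E_def using Ve
    by (simp add: exp_add[symmetric])
  define GW where "GW t = (snd (W t), - K t * fst (W t))" for t
  define G where "G t = (snd (Z t), - K t * fst (Z t))" for t
  have dZ2: "(Z2 has_vector_derivative GW t) (at t within {r..r+\<epsilon>})" if t: "t \<in> {r..r+\<epsilon>}" for t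
  proof -
    have img: "(\<lambda>t. t - r) ` {r..r+\<epsilon>} = {0..\<epsilon>}" by simp
    have "((\<lambda>t. t - r) has_real_derivative 1) (at t within {r..r+\<epsilon>})"
      by (auto intro!: derivative_eq_intros)
    hence "((\<lambda>t. t - r) has_vector_derivative 1) (at t within {r..r+\<epsilon>})"
      by (simp add: has_real_derivative_iff_has_vector_derivative)
    from vector_diff_chain_within[OF this, of V] Vd[of "t - r"] t img
    have "((\<lambda>t. V (t - r)) has_vector_derivative
          (snd (V (t - r)), - (1 - 2 * \<phi> ((t - r) / \<epsilon>)) * fst (V (t - r)))) (at t within {r..r+\<epsilon>})"
      by (simp add: o_def)
    hence "(Z2 has_vector_derivative E *\<^sub>R (snd (V (t - r)), - (1 - 2 * \<phi> ((t - r) / \<epsilon>)) * fst (V (t - r))))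
        (at t within {r..r+\<epsilon>})"
      unfolding Z2_def by (auto intro!: derivative_eq_intros)
    moreover have "W t = Z2 t" using t unfolding W_def by simp
    ultimately show ?thesis unfolding GW_def K_eq Z2_def by (simp add: algebra_simps)
  qed
  have dZ3: "(Z3 has_vector_derivative GW t) (at t within {r+\<epsilon>..})" if t: "t \<ge> r + \<epsilon>" for t
  proof -
    have "((\<lambda>t. exp (- t)) has_real_derivative - exp (- t)) (at t within {r+\<epsilon>..})"
      by (auto intro!: derivative_eq_intros)
    moreover have "((\<lambda>t. - exp (- t)) has_real_derivative exp (- t)) (at t within {r+\<epsilon>..})"
      by (auto intro!: derivative_eq_intros)
    ultimately have "(Z3 has_vector_derivative (- exp (- t), exp (- t))) (at t within {r+\<epsilon>..})"
      unfolding Z3_def has_real_derivative_iff_has_vector_derivative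
      by (rule has_vector_derivative_Pair)
    moreover have "W t = Z3 t" using t Z23 unfolding W_def by auto
    ultimately show ?thesis unfolding GW_def K3[OF t] Z3_def by simp
  qed
  have dW: "(W has_vector_derivative GW t) (at t within {r..})" if t: "t \<ge> r" for t
  proof -
    have s1: "{r..r+\<epsilon>} \<union> (closure {r..r+\<epsilon>} \<inter> closure {r+\<epsilon><..}) = {r..r+\<epsilon>}" by auto
    have s2: "{r+\<epsilon><..} \<union> (closure {r..r+\<epsilon>} \<inter> closure {r+\<epsilon><..}) = {r+\<epsilon>..}" using eps by auto
    have s3: "closure {r..r+\<epsilon>} \<inter> closure {r+\<epsilon><..} = {r+\<epsilon>}" using eps by auto
    have "((\<lambda>x. if x \<in> {r..r+\<epsilon>} then Z2 x else Z3 x) has_vector_derivative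
        (if t \<in> {r..r+\<epsilon>} then GW t else GW t)) (at t within {r..})"
      by (rule has_vector_derivative_If_within_closures[where S="{r..r+\<epsilon>}" and T="{r+\<epsilon><..}"])
        (use t eps s1 s2 s3 dZ2 dZ3 Z23 in auto)
    thus ?thesis unfolding W_def by simp
  qed
  have dZ1: "(Z1 has_vector_derivative (snd (Z1 t), - fst (Z1 t))) (at t within S)" for t S
  proof -
    have "((\<lambda>t. E * (a * cos (t - r) + b * sin (t - r))) has_real_derivative snd (Z1 t)) (at t within S)"
      unfolding Z1_def by (auto intro!: derivative_eq_intros simp: algebra_simps)
    moreover have "((\<lambda>t. E * (- a * sin (t - r) + b * cos (t - r))) has_real_derivative - fst (Z1 t)) (at t within S)"
      unfolding Z1_def by (auto intro!: derivative_eq_intros simp: algebra_simps)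
    ultimately show ?thesis
      unfolding has_real_derivative_iff_has_vector_derivative
      by (subst Z1_def, intro has_vector_derivative_Pair) simp_all
  qed
  have ZW: "Z t = W t" if "t \<ge> r" for t
    using that Z12 eps unfolding Z_def W_def by auto
  have dZ: "(Z has_vector_derivative G t) (at t within {0..})" if t: "t \<ge> 0" for t
  proof -
    have s1: "{0..r} \<union> (closure {0..r} \<inter> closure {r<..}) = {0..r}" by auto
    have s2: "{r<..} \<union> (closure {0..r} \<inter> closure {r<..}) = {r..}" using r by auto
    have s3: "closure {0..r} \<inter> closure {r<..} = {r}" using r by auto
    have g1: "(Z1 has_vector_derivative G t) (at t within {0..r})" if "t \<in> {0..r}" for t
    proof -
      have "G t = (snd (Z1 t), - fst (Z1 t))" unfolding G_def Z_def using that K1[of t] by simp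
      thus ?thesis using dZ1 by simp
    qed
    have g2: "(W has_vector_derivative G t) (at t within {r..})" if "t \<ge> r" for t
    proof -
      have "G t = GW t" unfolding G_def GW_def using ZW[OF that] by simp
      thus ?thesis using dW[OF that] by simp
    qed
    have "((\<lambda>x. if x \<in> {0..r} then Z1 x else W x) has_vector_derivative
        (if t \<in> {0..r} then G t else G t)) (at t within {0..})"
      by (rule has_vector_derivative_If_within_closures[where S="{0..r}" and T="{r<..}"])
        (use t r eps s1 s2 s3 g1 g2 Z12 in \<open>auto simp: W_def\<close>)
    thus ?thesis unfolding Z_def by simp
  qed
  show ?thesis
  proof (intro exI conjI)
    show "stable_sol \<phi> r \<epsilon> (\<lambda>t. fst (Z t)) (\<lambda>t. snd (Z t))"
      unfolding stable_sol_def
    proof (intro conjI allI impI)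
      fix t :: real assume "t \<ge> 0"
      from vd_fst[OF dZ[OF this]]
      show "((\<lambda>t. fst (Z t)) has_real_derivative snd (Z t)) (at t within {0..})" by (simp add: G_def)
    next
      fix t :: real assume "t \<ge> 0"
      from vd_snd[OF dZ[OF this]]
      show "((\<lambda>t. snd (Z t)) has_real_derivative - Kpar \<phi> r \<epsilon> t * fst (Z t)) (at t within {0..})"
        by (simp add: G_def K_def)
    next
      show "continuous_on {0..} (\<lambda>t. snd (Z t))"
        unfolding continuous_on_eq_continuous_within
        using has_vector_derivative_continuous[OF dZ]
        by (auto intro: continuous_within_compose2[where f=Z and g=snd] continuous_intros)
    next
      fix t :: real assume t: "t \<ge> r + \<epsilon>"
      have "Z t = Z3 t" using t eps r ZW Z23 unfolding W_def by auto
      thus "fst (Z t) = exp (- t)" unfolding Z3_def by simp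
    qed
    show "snd (Z 0) = 0" using r z unfolding Z_def Z1_def by (simp add: algebra_simps)
  qed
qed

theorem proposition3p1:
  fixes \<phi> :: "real \<Rightarrow> real"
  assumes "cutoff \<phi>"
  shows "\<forall>U::(real \<times> real) set. open U \<and> (pi / 4, 0) \<in> U \<longrightarrow>
           (\<exists>r \<epsilon>. (r, \<epsilon>) \<in> U \<and> r > 0 \<and> \<epsilon> > 0 \<and> r + \<epsilon> < pi / 2 \<and>
              (\<exists>Y D. stable_sol \<phi> r \<epsilon> Y D \<and> D 0 = 0))"
proof (intro allI impI)
  fix U :: "(real \<times> real) set" assume U: "open U \<and> (pi / 4, 0) \<in> U"
  have phi0: "\<And>x. x \<le> 0 \<Longrightarrow> \<phi> x = 0" and phi1: "\<And>x. x \<ge> 1 \<Longrightarrow> \<phi> x = 1"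
    and phib: "\<And>x. 0 \<le> \<phi> x \<and> \<phi> x \<le> 1" and sm: "smooth_real \<phi>"
    using assms unfolding cutoff_def by auto
  have "\<phi> differentiable (at x)" for x using sm unfolding smooth_real_def
    by (metis funpow_0)
  hence phic: "continuous_on UNIV \<phi>"
    by (meson continuous_at_imp_continuous_on differentiable_imp_continuous_within)
  obtain e where e: "e > 0" "ball (pi / 4, 0) e \<subseteq> U" using U open_contains_ball by blast
  define \<delta> where "\<delta> = min e (1/2)"
  have d: "\<delta> > 0" "\<delta> \<le> e" "\<delta> \<le> 1/2" using e unfolding \<delta>_def by auto
  obtain \<eta> where eta: "\<eta> > 0" "\<And>x. dist x 1 < \<eta> \<Longrightarrow> dist (arctan x) (arctan 1) < \<delta> / 2"
    using isCont_arctan[of 1, unfolded continuous_at_eps_delta] d by (metis half_gt_zero)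
  define \<epsilon> where "\<epsilon> = min (\<delta> / 4) (min (\<eta> / 16) (1/20))"
  have ep: "\<epsilon> > 0" "\<epsilon> \<le> 1/20" "\<epsilon> < \<delta> / 2" "\<epsilon> * 14 < \<eta>"
    using d eta unfolding \<epsilon>_def by auto
  define k where "k u = 1 - 2 * \<phi> (u / \<epsilon>)" for u
  have kc: "continuous_on UNIV k" unfolding k_def
    using ep by (intro continuous_intros continuous_on_compose2[OF phic]) auto
  have kb: "\<bar>k u\<bar> \<le> 1" for u using phib[of "u / \<epsilon>"] unfolding k_def by auto
  define c where "c = (exp (- \<epsilon>), - exp (- \<epsilon>))"
  obtain V where Vd: "\<And>u. u \<in> {0..\<epsilon>} \<Longrightarrow> (V has_vector_derivative (snd (V u), - k u * fst (V u))) (at u within {0..\<epsilon>})"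
    and Ve: "V \<epsilon> = c" and Vb: "norm (V 0 - c) \<le> 2 * \<epsilon> * norm c"
    using ode_sol[OF ep(1) _ kc kb, of c] ep by auto
  define a where "a = fst (V 0)"
  define b where "b = snd (V 0)"
  have ex: "1 - \<epsilon> \<le> exp (- \<epsilon>)" "exp (- \<epsilon>) \<le> 1" using exp_ge_add_one_self[of "- \<epsilon>"] ep by auto
  have "norm c \<le> 2 * exp (- \<epsilon>)" unfolding c_def using norm_Pair_le[of "exp (- \<epsilon>)" "- exp (- \<epsilon>)"] by simp
  hence nc: "norm c \<le> 2" using ex(2) by linarith
  have "2 * \<epsilon> * norm c \<le> 2 * \<epsilon> * 2" by (rule mult_left_mono[OF nc]) (use ep in simp)
  hence "norm (V 0 - c) \<le> 4 * \<epsilon>" using Vb by linarith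
  moreover have "\<bar>a - exp (- \<epsilon>)\<bar> \<le> norm (V 0 - c)" "\<bar>b + exp (- \<epsilon>)\<bar> \<le> norm (V 0 - c)"
  proof -
    have eq: "V 0 - c = (a - exp (- \<epsilon>), b + exp (- \<epsilon>))"
      unfolding a_def b_def c_def by (simp add: prod_eq_iff)
    show "\<bar>a - exp (- \<epsilon>)\<bar> \<le> norm (V 0 - c)" unfolding eq using norm_fst_le[of "a - exp (- \<epsilon>)" "b + exp (- \<epsilon>)"] by (simp only: real_norm_def)
    show "\<bar>b + exp (- \<epsilon>)\<bar> \<le> norm (V 0 - c)" unfolding eq using norm_snd_le[of "b + exp (- \<epsilon>)" "a - exp (- \<epsilon>)"] by (simp only: real_norm_def)
  qed
  ultimately have ab1: "\<bar>a - 1\<bar> \<le> 5 * \<epsilon>" "\<bar>b + 1\<bar> \<le> 5 * \<epsilon>" using ex by (smt (verit))+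
  have apos: "a \<ge> 3/4" and bneg: "b \<le> - 3/4" using ab1 ep by auto
  define x where "x = - b / a"
  have xpos: "x > 0" unfolding x_def using apos bneg by (simp add: divide_neg_pos)
  have "\<bar>x - 1\<bar> = \<bar>(- b - a) / a\<bar>" unfolding x_def using apos by (simp add: field_simps)
  also have "\<dots> = \<bar>- b - a\<bar> / a" using apos by simp
  also have "\<dots> \<le> (10 * \<epsilon>) / (3/4)"
    using apos ab1 by (intro frac_le) auto
  finally have "\<bar>x - 1\<bar> < \<eta>" using ep by simp
  hence xr: "\<bar>arctan x - pi / 4\<bar> < \<delta> / 2" using eta(2)[of x] by (simp add: dist_real_def arctan_one)
  define r where "r = arctan x"
  have rpos: "r > 0" unfolding r_def using xpos by simp
  have "sin r = x * cos r" unfolding r_def using tan_arctan[of x]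
    by (simp add: tan_def field_simps)
  hence z: "a * sin r + b * cos r = 0" unfolding x_def using apos by (simp add: field_simps)
  have "dist (r, \<epsilon>) (pi / 4, 0) \<le> \<bar>r - pi / 4\<bar> + \<bar>\<epsilon>\<bar>"
    unfolding dist_Pair_Pair dist_real_def using sqrt_sum_squares_le_sum_abs by simp
  also have "\<dots> < \<delta>" using xr ep unfolding r_def by simp
  finally have "(r, \<epsilon>) \<in> U" using e d by (auto simp: dist_commute)
  moreover have "r + \<epsilon> < pi / 2" using xr ep d pi_gt3 unfolding r_def abs_less_iff by linarith
  moreover have "\<exists>Y D. stable_sol \<phi> r \<epsilon> Y D \<and> D 0 = 0"
    by (rule build_Y[where V=V and a=a and b=b, OF phi0 phi1 ep(1) rpos _ _ _ z])
       (use Vd Ve in \<open>auto simp: k_def c_def a_def b_def\<close>)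
  ultimately show "\<exists>r \<epsilon>. (r, \<epsilon>) \<in> U \<and> r > 0 \<and> \<epsilon> > 0 \<and> r + \<epsilon> < pi / 2 \<and>
              (\<exists>Y D. stable_sol \<phi> r \<epsilon> Y D \<and> D 0 = 0)" using rpos ep by blast
qed

end
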